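(* Let $\theta:\mathbb{R}\to\mathbb{R}$ be convex, $I\subset\mathbb{R}$, $T:I\to\mathbb{R}$ a map, $[a,b]=\overline{\mathrm{co}(T(I))}$ and $y_0\in(a,b)$. (a) Assume $T$ is nondecreasing and define $\underline S(y):=\inf\{x:T(x)\ge y\}$ and $\underline\psi(y):=\int_{y_0}^y\partial_-\theta(z-\underline S(z))\,dz$ for $y\in(a,b)$. Then $\underline\psi$ is continuous on $(a,b)$ and, for every $x\in I$ and all $y'\in[T(x-),T(x)]\cap[a,b]$, \[ -\underline\psi(y')+\theta(y'-x)=\inf_{y\in[a,b]}\big(-\underline\psi(y)+\theta(y-x)\big). \] (b) Assume $T$ is nonincreasing and define $\overline S(y):=\sup\{x:T(x)\ge y\}$ and $\overline\psi(y):=\int_{y_0}^y\partial_-\theta(z-\overline S(z))\,dz$ for $y\in(a,b)$. Then $\overline\psi$ is continuous on $(a,b)$ and, for every $x\in I$ and all $y'\in[T(x+),T(x)]\cap[a,b]$, \[ -\overline\psi(y')+\theta(y'-x)=\sup_{y\in[a,b]}\big(-\overline\psi(y)+\theta(y-x)\big). \]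
   Context: $\partial_-\theta$ denotes the left-hand derivative of $\theta$; $\mathrm{co}$ denotes convex hull; $T(x-)$ and $T(x+)$ denote left and right limits of the monotone map $T$ at $x$. *)

theory Defs
  imports "HOL-Analysis.Analysis"
begin

text \<open>Left-hand derivative of a real function (exists everywhere for convex functions).\<close>
definition left_deriv :: "(real \<Rightarrow> real) \<Rightarrow> real \<Rightarrow> real" where
  "left_deriv \<theta> z = (THE d. ((\<lambda>t. (\<theta> t - \<theta> z) / (t - z)) \<longlongrightarrow> d) (at_left z))"

definition S_lower :: "real set \<Rightarrow> (real \<Rightarrow> real) \<Rightarrow> real \<Rightarrow> real" where
  "S_lower I T y = Inf {x \<in> I. y \<le> T x}"

definition S_upper :: "real set \<Rightarrow> (real \<Rightarrow> real) \<Rightarrow> real \<Rightarrow> real" where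
  "S_upper I T y = Sup {x \<in> I. y \<le> T x}"

definition psi_of :: "(real \<Rightarrow> real) \<Rightarrow> (real \<Rightarrow> real) \<Rightarrow> real \<Rightarrow> real \<Rightarrow> real" where
  "psi_of \<theta> S y0 y = (LBINT z = ereal y0..ereal y. left_deriv \<theta> (z - S z))"

definition ext_ab :: "real \<Rightarrow> real \<Rightarrow> (real \<Rightarrow> real) \<Rightarrow> real \<Rightarrow> ereal" where
  "ext_ab a b f y = (if a < y \<and> y < b then ereal (f y)
                     else Lim (at y within {a<..<b}) (\<lambda>z. ereal (f z)))"

end

theory Submission
  imports Defs
begin


lemma slope_mono:
  fixes \<theta> :: "real \<Rightarrow> real"
  assumes conv: "convex_on UNIV \<theta>" and "x < t" "t < y"
  shows "(\<theta> t - \<theta> x) / (t - x) \<le> (\<theta> y - \<theta> x) / (y - x)"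
    and "(\<theta> y - \<theta> x) / (y - x) \<le> (\<theta> y - \<theta> t) / (y - t)"
proof -
  have 1: "(\<theta> x - \<theta> t) / (x - t) \<le> (\<theta> x - \<theta> y) / (x - y)"
   and 2: "(\<theta> x - \<theta> y) / (x - y) \<le> (\<theta> t - \<theta> y) / (t - y)"
    using convex_on_slope_le[OF conv _ _ assms(2,3)] by auto
  have e1: "(\<theta> x - \<theta> t) / (x - t) = (\<theta> t - \<theta> x) / (t - x)"
    by (metis minus_diff_eq minus_divide_divide)
  have e2: "(\<theta> x - \<theta> y) / (x - y) = (\<theta> y - \<theta> x) / (y - x)"
    by (metis minus_diff_eq minus_divide_divide)
  have e3: "(\<theta> t - \<theta> y) / (t - y) = (\<theta> y - \<theta> t) / (y - t)"
    by (metis minus_diff_eq minus_divide_divide)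
  show "(\<theta> t - \<theta> x) / (t - x) \<le> (\<theta> y - \<theta> x) / (y - x)" using 1 e1 e2 by simp
  show "(\<theta> y - \<theta> x) / (y - x) \<le> (\<theta> y - \<theta> t) / (y - t)" using 2 e2 e3 by simp
qed

lemma left_deriv_eq:
  fixes \<theta> :: "real \<Rightarrow> real"
  assumes conv: "convex_on UNIV \<theta>"
  shows "left_deriv \<theta> z = (SUP u\<in>{..<z}. (\<theta> u - \<theta> z) / (u - z))"
    and "bdd_above ((\<lambda>u. (\<theta> u - \<theta> z) / (u - z)) ` {..<z})"
proof -
  let ?q = "\<lambda>u. (\<theta> u - \<theta> z) / (u - z)"
  have qe: "?q u = (\<theta> z - \<theta> u) / (z - u)" for u
    by (metis minus_diff_eq minus_divide_divide)
  have mono: "?q u1 \<le> ?q u2" if "u1 < u2" "u2 < z" for u1 u2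
    using slope_mono(2)[OF conv that] qe by simp
  have ub: "?q u \<le> (\<theta> (z+1) - \<theta> z) / ((z+1) - z)" if "u < z" for u
  proof -
    have "?q u \<le> (\<theta> (z+1) - \<theta> u) / ((z+1) - u)"
      using slope_mono(1)[OF conv that, of "z+1"] qe by simp
    also have "\<dots> \<le> (\<theta> (z+1) - \<theta> z) / ((z+1) - z)"
      using slope_mono(2)[OF conv that, of "z+1"] by simp
    finally show ?thesis .
  qed
  show bdd: "bdd_above (?q ` {..<z})"
    using ub by (auto intro!: bdd_aboveI2)
  let ?L = "SUP u\<in>{..<z}. ?q u"
  have lim: "(?q \<longlongrightarrow> ?L) (at_left z)"
  proof (rule increasing_tendsto)
    have ev: "\<forall>\<^sub>F n in at_left z. n \<in> {z-1<..<z}"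
      by (rule eventually_at_left_real) simp
    show "\<forall>\<^sub>F n in at_left z. ?q n \<le> ?L"
      using ev by (rule eventually_mono) (auto intro!: cSUP_upper bdd)
  next
    fix x assume "x < ?L"
    then obtain u0 where u0: "u0 < z" "x < ?q u0"
      using less_cSUP_iff[OF _ bdd] by auto
    have "\<forall>\<^sub>F n in at_left z. n \<in> {u0<..<z}"
      using eventually_at_left_real[of u0 z] u0(1) by auto
    then show "\<forall>\<^sub>F n in at_left z. x < ?q n"
      by (rule eventually_mono) (use u0 mono in force)
  qed
  show "left_deriv \<theta> z = ?L"
    unfolding left_deriv_def
  proof (rule the_equality)
    show "(?q \<longlongrightarrow> ?L) (at_left z)" by (rule lim)
  next
    fix d assume "(?q \<longlongrightarrow> d) (at_left z)"
    then show "d = ?L" using tendsto_unique[OF _ _ lim] by auto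
  qed
qed

lemma left_deriv_ge:
  fixes \<theta> :: "real \<Rightarrow> real"
  assumes conv: "convex_on UNIV \<theta>" and "s < t"
  shows "(\<theta> t - \<theta> s) / (t - s) \<le> left_deriv \<theta> t"
proof -
  have "(\<theta> t - \<theta> s) / (t - s) = (\<theta> s - \<theta> t) / (s - t)"
    by (metis minus_diff_eq minus_divide_divide)
  also have "\<dots> \<le> left_deriv \<theta> t"
    unfolding left_deriv_eq[OF conv]
    by (rule cSUP_upper) (use assms left_deriv_eq(2)[OF conv] in auto)
  finally show ?thesis .
qed

lemma left_deriv_le:
  fixes \<theta> :: "real \<Rightarrow> real"
  assumes conv: "convex_on UNIV \<theta>" and "s < t"
  shows "left_deriv \<theta> s \<le> (\<theta> t - \<theta> s) / (t - s)"
  unfolding left_deriv_eq[OF conv]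
proof (rule cSUP_least)
  fix u assume "u \<in> {..<s}"
  then have u: "u < s" by simp
  have "(\<theta> u - \<theta> s) / (u - s) = (\<theta> s - \<theta> u) / (s - u)"
    by (metis minus_diff_eq minus_divide_divide)
  also have "\<dots> \<le> (\<theta> t - \<theta> u) / (t - u)"
    using slope_mono(1)[OF conv u assms(2)] .
  also have "\<dots> \<le> (\<theta> t - \<theta> s) / (t - s)"
    using slope_mono(2)[OF conv u assms(2)] .
  finally show "(\<theta> u - \<theta> s) / (u - s) \<le> (\<theta> t - \<theta> s) / (t - s)" .
qed auto

lemma left_deriv_bounds:
  fixes \<theta> :: "real \<Rightarrow> real"
  assumes conv: "convex_on UNIV \<theta>" and "s \<le> t"
  shows "left_deriv \<theta> s * (t - s) \<le> \<theta> t - \<theta> s" "\<theta> t - \<theta> s \<le> left_deriv \<theta> t * (t - s)"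
proof -
  show "left_deriv \<theta> s * (t - s) \<le> \<theta> t - \<theta> s"
  proof (cases "s = t")
    case False
    then have "s < t" using assms by simp
    then show ?thesis using left_deriv_le[OF conv \<open>s<t\<close>] by (simp add: le_divide_eq mult.commute)
  qed simp
  show "\<theta> t - \<theta> s \<le> left_deriv \<theta> t * (t - s)"
  proof (cases "s = t")
    case False
    then have "s < t" using assms by simp
    then show ?thesis using left_deriv_ge[OF conv \<open>s<t\<close>] by (simp add: divide_le_eq mult.commute)
  qed simp
qed

lemma left_deriv_mono:
  fixes \<theta> :: "real \<Rightarrow> real"
  assumes conv: "convex_on UNIV \<theta>" and "s \<le> t"
  shows "left_deriv \<theta> s \<le> left_deriv \<theta> t"
proof (cases "s = t")
  case False
  then have "s < t" using assms by simp
  then show ?thesis using left_deriv_le[OF conv \<open>s<t\<close>] left_deriv_ge[OF conv \<open>s<t\<close>] by linarith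
qed simp



lemma const_by_halving:
  fixes F D :: "real \<Rightarrow> real"
  assumes "p \<le> q"
    and H: "\<And>t1 t2. p \<le> t1 \<Longrightarrow> t1 \<le> t2 \<Longrightarrow> t2 \<le> q \<Longrightarrow> \<bar>F t2 - F t1\<bar> \<le> (D t2 - D t1) * (t2 - t1)"
  shows "F q = F p"
proof -
  have claim: "\<forall>t1 t2. p \<le> t1 \<longrightarrow> t1 \<le> t2 \<longrightarrow> t2 \<le> q \<longrightarrow> \<bar>F t2 - F t1\<bar> \<le> (D t2 - D t1) * (t2 - t1) / 2^n" for n
  proof (induction n)
    case 0
    then show ?case using H by simp
  next
    case (Suc n)
    show ?case
    proof (intro allI impI)
      fix t1 t2 assume t: "p \<le> t1" "t1 \<le> t2" "t2 \<le> q"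
      define m where "m = (t1 + t2) / 2"
      have m: "t1 \<le> m" "m \<le> t2" using t by (auto simp: m_def)
      have "\<bar>F t2 - F t1\<bar> \<le> \<bar>F m - F t1\<bar> + \<bar>F t2 - F m\<bar>" by linarith
      also have "\<dots> \<le> (D m - D t1) * (m - t1) / 2^n + (D t2 - D m) * (t2 - m) / 2^n"
        using Suc.IH t m by (intro add_mono) auto
      also have "\<dots> = (D t2 - D t1) * (t2 - t1) / 2^Suc n"
        by (simp add: m_def field_simps)
      finally show "\<bar>F t2 - F t1\<bar> \<le> (D t2 - D t1) * (t2 - t1) / 2^Suc n" .
    qed
  qed
  define K where "K = (D q - D p) * (q - p)"
  have le: "\<bar>F q - F p\<bar> \<le> K / 2^n" for n
    using claim[of n] assms(1) by (auto simp: K_def)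
  have "(\<lambda>n. K / 2^n) \<longlonglongrightarrow> 0"
    by (intro LIMSEQ_divide_realpow_zero) auto
  then have "\<bar>F q - F p\<bar> \<le> 0"
    by (rule LIMSEQ_le_const) (use le in auto)
  then show ?thesis by simp
qed

lemma set_integrable_bdd:
  fixes f :: "real \<Rightarrow> real"
  assumes f: "f \<in> borel_measurable borel" and bnd: "\<And>z. z \<in> {p..q} \<Longrightarrow> \<bar>f z\<bar> \<le> M"
  shows "set_integrable lborel {p..q} f"
proof (rule set_integrable_bound[of lborel "{p..q}" "\<lambda>_. M"])
  show "set_integrable lborel {p..q} (\<lambda>_. M)"
    by (rule borel_integrable_atLeastAtMost') (rule continuous_on_const)
  show "set_borel_measurable lborel {p..q} f"
    unfolding set_borel_measurable_def using f by measurable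
  show "AE x in lborel. x \<in> {p..q} \<longrightarrow> norm (f x) \<le> norm M"
    using bnd by (auto intro!: AE_I2) (smt (verit) atLeastAtMost_iff)
qed

lemma left_deriv_shift_integrable:
  fixes \<theta> :: "real \<Rightarrow> real"
  assumes conv: "convex_on UNIV \<theta>"
  shows "set_integrable lborel {p..q} (\<lambda>z. left_deriv \<theta> (z - c))"
proof (rule set_integrable_bdd)
  have "mono (left_deriv \<theta>)" using left_deriv_mono[OF conv] by (auto intro: monoI)
  then have "left_deriv \<theta> \<in> borel_measurable borel" by (rule borel_measurable_mono)
  then show "(\<lambda>z. left_deriv \<theta> (z - c)) \<in> borel_measurable borel" by measurable
  fix z assume "z \<in> {p..q}"
  then have "left_deriv \<theta> (p - c) \<le> left_deriv \<theta> (z - c)" "left_deriv \<theta> (z - c) \<le> left_deriv \<theta> (q - c)"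
    using left_deriv_mono[OF conv] by auto
  then show "\<bar>left_deriv \<theta> (z - c)\<bar> \<le> \<bar>left_deriv \<theta> (p - c)\<bar> + \<bar>left_deriv \<theta> (q - c)\<bar>"
    by linarith
qed

lemma ftc_convex:
  fixes \<theta> :: "real \<Rightarrow> real"
  assumes conv: "convex_on UNIV \<theta>" and pq: "p \<le> q"
  shows "((\<lambda>z. left_deriv \<theta> (z - c)) has_integral (\<theta> (q - c) - \<theta> (p - c))) {p..q}"
proof -
  let ?D = "\<lambda>z. left_deriv \<theta> (z - c)"
  have int: "?D integrable_on {s..t}" for s t
    using set_borel_integral_eq_integral(1)[OF left_deriv_shift_integrable[OF conv]] .
  define F where "F t = \<theta> (t - c) - integral {p..t} ?D" for t
  have "F q = F p"
  proof (rule const_by_halving[OF pq, of F ?D])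
    fix t1 t2 assume t: "p \<le> t1" "t1 \<le> t2" "t2 \<le> q"
    have comb: "integral {p..t1} ?D + integral {t1..t2} ?D = integral {p..t2} ?D"
      by (rule Henstock_Kurzweil_Integration.integral_combine) (use t int in auto)
    have i1: "?D t1 * (t2 - t1) \<le> integral {t1..t2} ?D"
    proof -
      have "integral {t1..t2} (\<lambda>_. ?D t1) \<le> integral {t1..t2} ?D"
        by (rule integral_le) (use int left_deriv_mono[OF conv] in auto)
      then show ?thesis using t by (simp add: mult.commute)
    qed
    have i2: "integral {t1..t2} ?D \<le> ?D t2 * (t2 - t1)"
    proof -
      have "integral {t1..t2} ?D \<le> integral {t1..t2} (\<lambda>_. ?D t2)"
        by (rule integral_le) (use int left_deriv_mono[OF conv] in auto)
      then show ?thesis using t by (simp add: mult.commute)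
    qed
    have b1: "?D t1 * (t2 - t1) \<le> \<theta> (t2 - c) - \<theta> (t1 - c)"
      using left_deriv_bounds(1)[OF conv, of "t1 - c" "t2 - c"] t by simp
    have b2: "\<theta> (t2 - c) - \<theta> (t1 - c) \<le> ?D t2 * (t2 - t1)"
      using left_deriv_bounds(2)[OF conv, of "t1 - c" "t2 - c"] t by simp
    have "F t2 - F t1 = (\<theta> (t2 - c) - \<theta> (t1 - c)) - integral {t1..t2} ?D"
      unfolding F_def using comb by simp
    then show "\<bar>F t2 - F t1\<bar> \<le> (?D t2 - ?D t1) * (t2 - t1)"
      using i1 i2 b1 b2 by (simp add: left_diff_distrib abs_le_iff)
  qed
  then have "integral {p..q} ?D = \<theta> (q - c) - \<theta> (p - c)"
    by (simp add: F_def)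
  then show ?thesis using int[of p q] by (metis has_integral_integral)
qed



lemma psi_diff:
  fixes g :: "real \<Rightarrow> real"
  assumes gint: "\<And>p q. a < p \<Longrightarrow> q < b \<Longrightarrow> set_integrable lborel {p..q} g"
    and y0: "a < y0" "y0 < b" and pq: "a < p" "p \<le> q" "q < b"
  shows "(LBINT z=ereal y0..ereal q. g z) - (LBINT z=ereal y0..ereal p. g z) = integral {p..q} g"
    and "g integrable_on {p..q}"
proof -
  define m where "m = min y0 p"
  define M where "M = max y0 q"
  have mM: "a < m" "M < b" "m \<le> M" using y0 pq by (auto simp: m_def M_def)
  have si: "set_integrable lborel {m..M} g" using gint mM by auto
  have "interval_lebesgue_integrable lborel (ereal m) (ereal M) g"
    unfolding interval_lebesgue_integrable_def using mM
    by (auto intro!: set_integrable_subset[OF si])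
  moreover have "min (ereal y0) (min (ereal p) (ereal q)) = ereal m"
    "max (ereal y0) (max (ereal p) (ereal q)) = ereal M"
    using pq by (auto simp: m_def M_def min_def max_def)
  ultimately have sum: "(LBINT z=ereal y0..ereal p. g z) + (LBINT z=ereal p..ereal q. g z) = (LBINT z=ereal y0..ereal q. g z)"
    by (intro interval_integral_sum) simp
  have sp: "set_integrable lborel {p..q} g" using gint pq by auto
  have "(LBINT z=ereal p..ereal q. g z) = (LBINT z:{p..q}. g z)"
    using pq by (simp add: interval_integral_Icc)
  also have "\<dots> = integral {p..q} g"
    by (rule set_borel_integral_eq_integral(2)[OF sp])
  finally show "(LBINT z=ereal y0..ereal q. g z) - (LBINT z=ereal y0..ereal p. g z) = integral {p..q} g"
    using sum by linarith
  show "g integrable_on {p..q}" by (rule set_borel_integral_eq_integral(1)[OF sp])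
qed

lemma psi_cont:
  fixes g :: "real \<Rightarrow> real"
  assumes gint: "\<And>p q. a < p \<Longrightarrow> q < b \<Longrightarrow> set_integrable lborel {p..q} g"
    and y0: "a < y0" "y0 < b"
  shows "continuous_on {a<..<b} (\<lambda>y. LBINT z=ereal y0..ereal y. g z)"
proof (rule continuous_at_imp_continuous_on, intro ballI)
  fix y assume y: "y \<in> {a<..<b}"
  define p where "p = (a + y) / 2"
  define q where "q = (y + b) / 2"
  have pq: "a < p" "p < y" "y < q" "q < b" using y by (auto simp: p_def q_def)
  let ?psi = "\<lambda>y. LBINT z=ereal y0..ereal y. g z"
  have int: "g integrable_on {p..q}" using psi_diff(2)[OF gint y0, of p q] pq by auto
  have "continuous_on {p..q} (\<lambda>z. ?psi p + integral {p..z} g)"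
    by (intro continuous_intros indefinite_integral_continuous_1 int)
  moreover have "?psi p + integral {p..z} g = ?psi z" if "z \<in> {p..q}" for z
    using psi_diff(1)[OF gint y0, of p z] pq that by auto
  ultimately have "continuous_on {p..q} ?psi"
    using continuous_on_eq by force
  then show "isCont ?psi y"
    by (rule continuous_on_interior) (use pq in auto)
qed

lemma core_le:
  fixes g \<theta> :: "real \<Rightarrow> real"
  assumes conv: "convex_on UNIV \<theta>"
    and gint: "\<And>p q. a < p \<Longrightarrow> q < b \<Longrightarrow> set_integrable lborel {p..q} g"
    and y0: "a < y0" "y0 < b" and pq: "a < p" "p \<le> q" "q < b"
    and le: "\<And>z. p < z \<Longrightarrow> z \<le> q \<Longrightarrow> g z \<le> left_deriv \<theta> (z - c)"
  shows "- (LBINT z=ereal y0..ereal p. g z) + \<theta> (p - c) \<le> - (LBINT z=ereal y0..ereal q. g z) + \<theta> (q - c)"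
proof -
  let ?D = "\<lambda>z. left_deriv \<theta> (z - c)"
  define g' where "g' z = (if z = p then ?D z else g z)" for z
  have gi: "g integrable_on {p..q}" using psi_diff(2)[OF gint y0 pq] .
  have g'i: "g' integrable_on {p..q}"
    by (rule integrable_spike_finite[of "{p}", OF _ _ gi]) (auto simp: g'_def)
  have "integral {p..q} g = integral {p..q} g'"
    by (rule integral_spike[of "{p}"]) (auto simp: g'_def)
  also have "\<dots> \<le> integral {p..q} ?D"
    by (rule integral_le[OF g'i]) (use ftc_convex[OF conv pq(2), of c] le in \<open>auto simp: g'_def\<close>)
  also have "\<dots> = \<theta> (q - c) - \<theta> (p - c)"
    using ftc_convex[OF conv pq(2), of c] by (rule integral_unique)
  finally show ?thesis using psi_diff(1)[OF gint y0 pq] by linarith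
qed

lemma core_ge:
  fixes g \<theta> :: "real \<Rightarrow> real"
  assumes conv: "convex_on UNIV \<theta>"
    and gint: "\<And>p q. a < p \<Longrightarrow> q < b \<Longrightarrow> set_integrable lborel {p..q} g"
    and y0: "a < y0" "y0 < b" and pq: "a < p" "p \<le> q" "q < b"
    and ge: "\<And>z. p < z \<Longrightarrow> z \<le> q \<Longrightarrow> left_deriv \<theta> (z - c) \<le> g z"
  shows "- (LBINT z=ereal y0..ereal q. g z) + \<theta> (q - c) \<le> - (LBINT z=ereal y0..ereal p. g z) + \<theta> (p - c)"
proof -
  let ?D = "\<lambda>z. left_deriv \<theta> (z - c)"
  define g' where "g' z = (if z = p then ?D z else g z)" for z
  have gi: "g integrable_on {p..q}" using psi_diff(2)[OF gint y0 pq] .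
  have g'i: "g' integrable_on {p..q}"
    by (rule integrable_spike_finite[of "{p}", OF _ _ gi]) (auto simp: g'_def)
  have "\<theta> (q - c) - \<theta> (p - c) = integral {p..q} ?D"
    using ftc_convex[OF conv pq(2), of c] by (rule integral_unique[symmetric])
  also have "\<dots> \<le> integral {p..q} g'"
    by (rule integral_le[OF _ g'i]) (use ftc_convex[OF conv pq(2), of c] ge in \<open>auto simp: g'_def\<close>)
  also have "\<dots> = integral {p..q} g"
    by (rule integral_spike[of "{p}"]) (auto simp: g'_def)
  finally show ?thesis using psi_diff(1)[OF gint y0 pq] by linarith
qed



lemma at_Ioo_right: "(a::real) < b \<Longrightarrow> at a within {a<..<b} = at_right a"
  by (rule at_within_nhd[of _ "{..<b}"]) auto

lemma at_Ioo_left: "(a::real) < b \<Longrightarrow> at b within {a<..<b} = at_left b"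
  by (rule at_within_nhd[of _ "{a<..}"]) auto

lemma mono_lim_right:
  fixes G :: "real \<Rightarrow> real"
  assumes "a < p" and mono: "\<And>z1 z2. a < z1 \<Longrightarrow> z1 \<le> z2 \<Longrightarrow> z2 < p \<Longrightarrow> G z1 \<le> G z2"
  shows "\<exists>l. ((\<lambda>z. ereal (G z)) \<longlongrightarrow> l) (at_right a)"
proof -
  let ?l = "INF z\<in>{a<..<p}. ereal (G z)"
  have ev: "\<forall>\<^sub>F z in at_right a. z \<in> {a<..<p}" by (rule eventually_at_right_real) fact
  have "((\<lambda>z. ereal (G z)) \<longlongrightarrow> ?l) (at_right a)"
  proof (rule decreasing_tendsto)
    show "\<forall>\<^sub>F n in at_right a. ?l \<le> ereal (G n)"
      using ev by (rule eventually_mono) (auto intro: INF_lower)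
  next
    fix x assume "?l < x"
    then obtain z0 where z0: "z0 \<in> {a<..<p}" "ereal (G z0) < x" by (auto simp: INF_less_iff)
    have "\<forall>\<^sub>F z in at_right a. z \<in> {a<..<z0}" by (rule eventually_at_right_real) (use z0 in auto)
    then show "\<forall>\<^sub>F n in at_right a. ereal (G n) < x"
    proof (rule eventually_mono)
      fix z assume "z \<in> {a<..<z0}"
      then have "G z \<le> G z0" using mono[of z z0] z0 by auto
      then show "ereal (G z) < x" using z0(2) by (meson ereal_less_eq(3) le_less_trans)
    qed
  qed
  then show ?thesis by blast
qed

lemma mono_lim_left:
  fixes G :: "real \<Rightarrow> real"
  assumes "p < b" and mono: "\<And>z1 z2. p < z1 \<Longrightarrow> z1 \<le> z2 \<Longrightarrow> z2 < b \<Longrightarrow> G z1 \<le> G z2"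
  shows "\<exists>l. ((\<lambda>z. ereal (G z)) \<longlongrightarrow> l) (at_left b)"
proof -
  let ?l = "SUP z\<in>{p<..<b}. ereal (G z)"
  have ev: "\<forall>\<^sub>F z in at_left b. z \<in> {p<..<b}" by (rule eventually_at_left_real) fact
  have "((\<lambda>z. ereal (G z)) \<longlongrightarrow> ?l) (at_left b)"
  proof (rule increasing_tendsto)
    show "\<forall>\<^sub>F n in at_left b. ereal (G n) \<le> ?l"
      using ev by (rule eventually_mono) (auto intro: SUP_upper)
  next
    fix x assume "x < ?l"
    then obtain z0 where z0: "z0 \<in> {p<..<b}" "x < ereal (G z0)" by (auto simp: less_SUP_iff)
    have "\<forall>\<^sub>F z in at_left b. z \<in> {z0<..<b}" by (rule eventually_at_left_real) (use z0 in auto)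
    then show "\<forall>\<^sub>F n in at_left b. x < ereal (G n)"
    proof (rule eventually_mono)
      fix z assume "z \<in> {z0<..<b}"
      then have "G z0 \<le> G z" using mono[of z0 z] z0 by auto
      then show "x < ereal (G z)" using z0(2) by (meson ereal_less_eq(3) less_le_trans)
    qed
  qed
  then show ?thesis by blast
qed

lemma lim_neg:
  fixes G :: "real \<Rightarrow> real"
  assumes "((\<lambda>z. ereal (- G z)) \<longlongrightarrow> l) F"
  shows "\<exists>l. ((\<lambda>z. ereal (G z)) \<longlongrightarrow> l) F"
proof -
  have "((\<lambda>z. - ereal (- G z)) \<longlongrightarrow> - l) F" using assms by (rule tendsto_uminus_ereal)
  then show ?thesis by auto
qed

lemma valley:
  fixes F :: "real \<Rightarrow> ereal"
  assumes ab: "a < b"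
    and la: "(F \<longlongrightarrow> F a) (at_right a)" and lb: "(F \<longlongrightarrow> F b) (at_left b)"
    and M1: "\<And>z1 z2. a < z1 \<Longrightarrow> z1 \<le> z2 \<Longrightarrow> z2 \<le> y' \<Longrightarrow> z2 < b \<Longrightarrow> F z2 \<le> F z1"
    and M2: "\<And>z1 z2. a < z1 \<Longrightarrow> y' \<le> z1 \<Longrightarrow> z1 \<le> z2 \<Longrightarrow> z2 < b \<Longrightarrow> F z1 \<le> F z2"
    and y': "y' \<in> {a..b}" and y: "y \<in> {a..b}"
  shows "F y' \<le> F y"
proof -
  have A: "F y' \<le> F w" if w: "a < w" "w < b" for w
  proof -
    consider "a < y'" "y' < b" | "y' = a" | "y' = b" using y' by fastforce
    then show ?thesis
    proof cases
      case 1
      then show ?thesis using M1[of w y'] M2[of y' w] w by (cases "w \<le> y'") auto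
    next
      case 2
      have "\<forall>\<^sub>F z in at_right a. z \<in> {a<..<w}" by (rule eventually_at_right_real) fact
      then have "\<forall>\<^sub>F z in at_right a. F z \<le> F w"
        by (rule eventually_mono) (use M2 2 w in auto)
      then have "F a \<le> F w" by (rule tendsto_upperbound[OF la]) auto
      then show ?thesis using 2 by simp
    next
      case 3
      have "\<forall>\<^sub>F z in at_left b. z \<in> {w<..<b}" by (rule eventually_at_left_real) fact
      then have "\<forall>\<^sub>F z in at_left b. F z \<le> F w"
        by (rule eventually_mono) (use M1 3 w in auto)
      then have "F b \<le> F w" by (rule tendsto_upperbound[OF lb]) auto
      then show ?thesis using 3 by simp
    qed
  qed
  consider "a < y" "y < b" | "y = a" | "y = b" using y by fastforce
  then show ?thesis
  proof cases
    case 1 then show ?thesis using A by auto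
  next
    case 2
    have "\<forall>\<^sub>F z in at_right a. z \<in> {a<..<b}" by (rule eventually_at_right_real) fact
    then have "\<forall>\<^sub>F z in at_right a. F y' \<le> F z"
      by (rule eventually_mono) (use A in auto)
    then have "F y' \<le> F a" by (rule tendsto_lowerbound[OF la]) auto
    then show ?thesis using 2 by simp
  next
    case 3
    have "\<forall>\<^sub>F z in at_left b. z \<in> {a<..<b}" by (rule eventually_at_left_real) fact
    then have "\<forall>\<^sub>F z in at_left b. F y' \<le> F z"
      by (rule eventually_mono) (use A in auto)
    then have "F y' \<le> F b" by (rule tendsto_lowerbound[OF lb]) auto
    then show ?thesis using 3 by simp
  qed
qed



lemma theta_shift_tendsto:
  fixes \<theta> :: "real \<Rightarrow> real"
  assumes conv: "convex_on UNIV \<theta>"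
  shows "((\<lambda>z. ereal (\<theta> (z - c))) \<longlongrightarrow> ereal (\<theta> (u - c))) (at u within A)"
proof -
  have "continuous_on UNIV \<theta>" by (rule convex_on_continuous[OF open_UNIV conv])
  then have ic: "isCont \<theta> (u - c)" by (simp add: continuous_on_eq_continuous_at)
  have "((\<lambda>z. z - c) \<longlongrightarrow> u - c) (at u within A)" by (intro tendsto_intros)
  then have "((\<lambda>z. \<theta> (z - c)) \<longlongrightarrow> \<theta> (u - c)) (at u within A)"
    by (rule isCont_tendsto_compose[OF ic])
  then show ?thesis by (simp add: lim_ereal)
qed

lemma psi_lim_right:
  fixes g \<theta> :: "real \<Rightarrow> real"
  assumes conv: "convex_on UNIV \<theta>"
    and gint: "\<And>p q. a < p \<Longrightarrow> q < b \<Longrightarrow> set_integrable lborel {p..q} g"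
    and y0: "a < y0" "y0 < b" and p: "a < p" "p < b"
    and cond: "(\<forall>z. a < z \<longrightarrow> z \<le> p \<longrightarrow> left_deriv \<theta> (z - c) \<le> g z) \<or>
               (\<forall>z. a < z \<longrightarrow> z \<le> p \<longrightarrow> g z \<le> left_deriv \<theta> (z - c))"
  shows "\<exists>l. ((\<lambda>z. ereal (LBINT t=ereal y0..ereal z. g t)) \<longlongrightarrow> l) (at_right a)"
proof -
  let ?psi = "\<lambda>z. LBINT t=ereal y0..ereal z. g t"
  define G where "G z = - ?psi z + \<theta> (z - c)" for z
  have "\<exists>l. ((\<lambda>z. ereal (G z)) \<longlongrightarrow> l) (at_right a)"
    using cond
  proof
    assume c1: "\<forall>z. a < z \<longrightarrow> z \<le> p \<longrightarrow> left_deriv \<theta> (z - c) \<le> g z"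
    have "\<exists>l. ((\<lambda>z. ereal (- G z)) \<longlongrightarrow> l) (at_right a)"
    proof (rule mono_lim_right[OF p(1)])
      fix z1 z2 assume z: "a < z1" "z1 \<le> z2" "z2 < p"
      have "G z2 \<le> G z1" unfolding G_def
        by (rule core_ge[OF conv gint y0]) (use z p c1 in auto)
      then show "- G z1 \<le> - G z2" by simp
    qed
    then show ?thesis using lim_neg by blast
  next
    assume c2: "\<forall>z. a < z \<longrightarrow> z \<le> p \<longrightarrow> g z \<le> left_deriv \<theta> (z - c)"
    show ?thesis
    proof (rule mono_lim_right[OF p(1)])
      fix z1 z2 assume z: "a < z1" "z1 \<le> z2" "z2 < p"
      show "G z1 \<le> G z2" unfolding G_def
        by (rule core_le[OF conv gint y0]) (use z p c2 in auto)
    qed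
  qed
  then obtain l where l: "((\<lambda>z. ereal (G z)) \<longlongrightarrow> l) (at_right a)" by blast
  have "((\<lambda>z. ereal (\<theta> (z - c)) + - ereal (G z)) \<longlongrightarrow> ereal (\<theta> (a - c)) + - l) (at_right a)"
    by (rule tendsto_add_ereal_general2[OF _ theta_shift_tendsto[OF conv] tendsto_uminus_ereal[OF l]]) simp
  moreover have "ereal (\<theta> (z - c)) + - ereal (G z) = ereal (?psi z)" for z
    by (simp add: G_def)
  ultimately show ?thesis by auto
qed

lemma psi_lim_left:
  fixes g \<theta> :: "real \<Rightarrow> real"
  assumes conv: "convex_on UNIV \<theta>"
    and gint: "\<And>p q. a < p \<Longrightarrow> q < b \<Longrightarrow> set_integrable lborel {p..q} g"
    and y0: "a < y0" "y0 < b" and p: "a < p" "p < b"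
    and cond: "(\<forall>z. p < z \<longrightarrow> z < b \<longrightarrow> left_deriv \<theta> (z - c) \<le> g z) \<or>
               (\<forall>z. p < z \<longrightarrow> z < b \<longrightarrow> g z \<le> left_deriv \<theta> (z - c))"
  shows "\<exists>l. ((\<lambda>z. ereal (LBINT t=ereal y0..ereal z. g t)) \<longlongrightarrow> l) (at_left b)"
proof -
  let ?psi = "\<lambda>z. LBINT t=ereal y0..ereal z. g t"
  define G where "G z = - ?psi z + \<theta> (z - c)" for z
  have "\<exists>l. ((\<lambda>z. ereal (G z)) \<longlongrightarrow> l) (at_left b)"
    using cond
  proof
    assume c1: "\<forall>z. p < z \<longrightarrow> z < b \<longrightarrow> left_deriv \<theta> (z - c) \<le> g z"
    have "\<exists>l. ((\<lambda>z. ereal (- G z)) \<longlongrightarrow> l) (at_left b)"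
    proof (rule mono_lim_left[OF p(2)])
      fix z1 z2 assume z: "p < z1" "z1 \<le> z2" "z2 < b"
      have "G z2 \<le> G z1" unfolding G_def
        by (rule core_ge[OF conv gint y0]) (use z p c1 in auto)
      then show "- G z1 \<le> - G z2" by simp
    qed
    then show ?thesis using lim_neg by blast
  next
    assume c2: "\<forall>z. p < z \<longrightarrow> z < b \<longrightarrow> g z \<le> left_deriv \<theta> (z - c)"
    show ?thesis
    proof (rule mono_lim_left[OF p(2)])
      fix z1 z2 assume z: "p < z1" "z1 \<le> z2" "z2 < b"
      show "G z1 \<le> G z2" unfolding G_def
        by (rule core_le[OF conv gint y0]) (use z p c2 in auto)
    qed
  qed
  then obtain l where l: "((\<lambda>z. ereal (G z)) \<longlongrightarrow> l) (at_left b)" by blast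
  have "((\<lambda>z. ereal (\<theta> (z - c)) + - ereal (G z)) \<longlongrightarrow> ereal (\<theta> (b - c)) + - l) (at_left b)"
    by (rule tendsto_add_ereal_general2[OF _ theta_shift_tendsto[OF conv] tendsto_uminus_ereal[OF l]]) simp
  moreover have "ereal (\<theta> (z - c)) + - ereal (G z) = ereal (?psi z)" for z
    by (simp add: G_def)
  ultimately show ?thesis by auto
qed



lemma ext_lim_right:
  assumes ab: "a < b" and l: "((\<lambda>z. ereal (f z)) \<longlongrightarrow> l) (at_right a)"
  shows "ext_ab a b f a = l" "((\<lambda>z. ext_ab a b f z) \<longlongrightarrow> l) (at_right a)"
proof -
  show "ext_ab a b f a = l"
    unfolding ext_ab_def using ab l by (simp add: at_Ioo_right tendsto_Lim)
  have "\<forall>\<^sub>F z in at_right a. z \<in> {a<..<b}" by (rule eventually_at_right_real) fact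
  then have "\<forall>\<^sub>F z in at_right a. ereal (f z) = ext_ab a b f z"
    by (rule eventually_mono) (auto simp: ext_ab_def)
  then show "((\<lambda>z. ext_ab a b f z) \<longlongrightarrow> l) (at_right a)"
    using l Lim_transform_eventually by blast
qed

lemma ext_lim_left:
  assumes ab: "a < b" and l: "((\<lambda>z. ereal (f z)) \<longlongrightarrow> l) (at_left b)"
  shows "ext_ab a b f b = l" "((\<lambda>z. ext_ab a b f z) \<longlongrightarrow> l) (at_left b)"
proof -
  show "ext_ab a b f b = l"
    unfolding ext_ab_def using ab l by (simp add: at_Ioo_left tendsto_Lim)
  have "\<forall>\<^sub>F z in at_left b. z \<in> {a<..<b}" by (rule eventually_at_left_real) fact
  then have "\<forall>\<^sub>F z in at_left b. ereal (f z) = ext_ab a b f z"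
    by (rule eventually_mono) (auto simp: ext_ab_def)
  then show "((\<lambda>z. ext_ab a b f z) \<longlongrightarrow> l) (at_left b)"
    using l Lim_transform_eventually by blast
qed

lemma F_lims:
  fixes \<theta> f :: "real \<Rightarrow> real"
  assumes conv: "convex_on UNIV \<theta>" and ab: "a < b"
    and la: "\<exists>l. ((\<lambda>z. ereal (f z)) \<longlongrightarrow> l) (at_right a)"
    and lb: "\<exists>l. ((\<lambda>z. ereal (f z)) \<longlongrightarrow> l) (at_left b)"
  shows "((\<lambda>y. - ext_ab a b f y + ereal (\<theta> (y - x))) \<longlongrightarrow> - ext_ab a b f a + ereal (\<theta> (a - x))) (at_right a)"
    and "((\<lambda>y. - ext_ab a b f y + ereal (\<theta> (y - x))) \<longlongrightarrow> - ext_ab a b f b + ereal (\<theta> (b - x))) (at_left b)"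
proof -
  obtain l where l: "((\<lambda>z. ereal (f z)) \<longlongrightarrow> l) (at_right a)" using la by blast
  show "((\<lambda>y. - ext_ab a b f y + ereal (\<theta> (y - x))) \<longlongrightarrow> - ext_ab a b f a + ereal (\<theta> (a - x))) (at_right a)"
    unfolding ext_lim_right(1)[OF ab l]
    by (rule tendsto_add_ereal_general1[OF _ tendsto_uminus_ereal[OF ext_lim_right(2)[OF ab l]]
          theta_shift_tendsto[OF conv]]) auto
  obtain l where l: "((\<lambda>z. ereal (f z)) \<longlongrightarrow> l) (at_left b)" using lb by blast
  show "((\<lambda>y. - ext_ab a b f y + ereal (\<theta> (y - x))) \<longlongrightarrow> - ext_ab a b f b + ereal (\<theta> (b - x))) (at_left b)"
    unfolding ext_lim_left(1)[OF ab l]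
    by (rule tendsto_add_ereal_general1[OF _ tendsto_uminus_ereal[OF ext_lim_left(2)[OF ab l]]
          theta_shift_tendsto[OF conv]]) auto
qed

lemma psi_of_eq: "psi_of \<theta> S y0 = (\<lambda>y. LBINT z=ereal y0..ereal y. left_deriv \<theta> (z - S z))"
  by (simp add: psi_of_def fun_eq_iff)

lemma generic_INF:
  fixes \<theta> S :: "real \<Rightarrow> real"
  assumes conv: "convex_on UNIV \<theta>" and y0: "a < y0" "y0 < b"
    and gint: "\<And>p q. a < p \<Longrightarrow> q < b \<Longrightarrow> set_integrable lborel {p..q} (\<lambda>z. left_deriv \<theta> (z - S z))"
    and la: "\<exists>l. ((\<lambda>z. ereal (psi_of \<theta> S y0 z)) \<longlongrightarrow> l) (at_right a)"
    and lb: "\<exists>l. ((\<lambda>z. ereal (psi_of \<theta> S y0 z)) \<longlongrightarrow> l) (at_left b)"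
    and c1: "\<And>z. a < z \<Longrightarrow> z < b \<Longrightarrow> z \<le> y' \<Longrightarrow> left_deriv \<theta> (z - x) \<le> left_deriv \<theta> (z - S z)"
    and c2: "\<And>z. a < z \<Longrightarrow> z < b \<Longrightarrow> y' < z \<Longrightarrow> left_deriv \<theta> (z - S z) \<le> left_deriv \<theta> (z - x)"
    and y': "y' \<in> {a..b}"
  shows "- ext_ab a b (psi_of \<theta> S y0) y' + ereal (\<theta> (y' - x)) =
         (INF y\<in>{a..b}. - ext_ab a b (psi_of \<theta> S y0) y + ereal (\<theta> (y - x)))"
proof -
  have ab: "a < b" using y0 by simp
  define F where "F y = - ext_ab a b (psi_of \<theta> S y0) y + ereal (\<theta> (y - x))" for y
  have Fi: "F z = ereal (- psi_of \<theta> S y0 z + \<theta> (z - x))" if "a < z" "z < b" for z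
    using that by (simp add: F_def ext_ab_def)
  have le: "F y' \<le> F y" if y: "y \<in> {a..b}" for y
  proof (rule valley[OF ab _ _ _ _ y' y])
    show "(F \<longlongrightarrow> F a) (at_right a)" unfolding F_def by (rule F_lims(1)[OF conv ab la lb])
    show "(F \<longlongrightarrow> F b) (at_left b)" unfolding F_def by (rule F_lims(2)[OF conv ab la lb])
  next
    fix z1 z2 assume z: "a < z1" "z1 \<le> z2" "z2 \<le> y'" "z2 < b"
    have "- psi_of \<theta> S y0 z2 + \<theta> (z2 - x) \<le> - psi_of \<theta> S y0 z1 + \<theta> (z1 - x)"
      unfolding psi_of_eq by (rule core_ge[OF conv gint y0]) (use z c1 in auto)
    then show "F z2 \<le> F z1" using Fi z by simp
  next
    fix z1 z2 assume z: "a < z1" "y' \<le> z1" "z1 \<le> z2" "z2 < b"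
    have "- psi_of \<theta> S y0 z1 + \<theta> (z1 - x) \<le> - psi_of \<theta> S y0 z2 + \<theta> (z2 - x)"
      unfolding psi_of_eq by (rule core_le[OF conv gint y0]) (use z c2 in auto)
    then show "F z1 \<le> F z2" using Fi z by simp
  qed
  have "F y' = (INF y\<in>{a..b}. F y)"
    by (rule antisym) (auto intro!: INF_greatest INF_lower y' le)
  then show ?thesis by (simp add: F_def)
qed

lemma generic_SUP:
  fixes \<theta> S :: "real \<Rightarrow> real"
  assumes conv: "convex_on UNIV \<theta>" and y0: "a < y0" "y0 < b"
    and gint: "\<And>p q. a < p \<Longrightarrow> q < b \<Longrightarrow> set_integrable lborel {p..q} (\<lambda>z. left_deriv \<theta> (z - S z))"
    and la: "\<exists>l. ((\<lambda>z. ereal (psi_of \<theta> S y0 z)) \<longlongrightarrow> l) (at_right a)"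
    and lb: "\<exists>l. ((\<lambda>z. ereal (psi_of \<theta> S y0 z)) \<longlongrightarrow> l) (at_left b)"
    and c1: "\<And>z. a < z \<Longrightarrow> z < b \<Longrightarrow> z \<le> y' \<Longrightarrow> left_deriv \<theta> (z - S z) \<le> left_deriv \<theta> (z - x)"
    and c2: "\<And>z. a < z \<Longrightarrow> z < b \<Longrightarrow> y' < z \<Longrightarrow> left_deriv \<theta> (z - x) \<le> left_deriv \<theta> (z - S z)"
    and y': "y' \<in> {a..b}"
  shows "- ext_ab a b (psi_of \<theta> S y0) y' + ereal (\<theta> (y' - x)) =
         (SUP y\<in>{a..b}. - ext_ab a b (psi_of \<theta> S y0) y + ereal (\<theta> (y - x)))"
proof -
  have ab: "a < b" using y0 by simp
  define F where "F y = - ext_ab a b (psi_of \<theta> S y0) y + ereal (\<theta> (y - x))" for y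
  have Fi: "F z = ereal (- psi_of \<theta> S y0 z + \<theta> (z - x))" if "a < z" "z < b" for z
    using that by (simp add: F_def ext_ab_def)
  have le: "- F y' \<le> - F y" if y: "y \<in> {a..b}" for y
  proof (rule valley[OF ab _ _ _ _ y' y, of "\<lambda>y. - F y"])
    show "((\<lambda>y. - F y) \<longlongrightarrow> - F a) (at_right a)" unfolding F_def
      by (rule tendsto_uminus_ereal[OF F_lims(1)[OF conv ab la lb]])
    show "((\<lambda>y. - F y) \<longlongrightarrow> - F b) (at_left b)" unfolding F_def
      by (rule tendsto_uminus_ereal[OF F_lims(2)[OF conv ab la lb]])
  next
    fix z1 z2 assume z: "a < z1" "z1 \<le> z2" "z2 \<le> y'" "z2 < b"
    have "- psi_of \<theta> S y0 z1 + \<theta> (z1 - x) \<le> - psi_of \<theta> S y0 z2 + \<theta> (z2 - x)"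
      unfolding psi_of_eq by (rule core_le[OF conv gint y0]) (use z c1 in auto)
    then show "- F z2 \<le> - F z1" using Fi z by simp
  next
    fix z1 z2 assume z: "a < z1" "y' \<le> z1" "z1 \<le> z2" "z2 < b"
    have "- psi_of \<theta> S y0 z2 + \<theta> (z2 - x) \<le> - psi_of \<theta> S y0 z1 + \<theta> (z1 - x)"
      unfolding psi_of_eq by (rule core_ge[OF conv gint y0]) (use z c2 in auto)
    then show "- F z1 \<le> - F z2" using Fi z by simp
  qed
  have "F y' = (SUP y\<in>{a..b}. F y)"
    by (rule antisym) (use le in \<open>auto intro!: SUP_least SUP_upper y'\<close>)
  then show ?thesis by (simp add: F_def)
qed



lemma hull_facts:
  fixes T :: "real \<Rightarrow> real"
  assumes hull: "closure (convex hull (T ` I)) = {a..b}" and ab: "a < b"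
  shows "\<And>y. y < b \<Longrightarrow> \<exists>x\<in>I. y < T x" "\<And>y. a < y \<Longrightarrow> \<exists>x\<in>I. T x < y"
proof -
  fix y assume y: "y < b"
  show "\<exists>x\<in>I. y < T x"
  proof (rule ccontr)
    assume "\<not> ?thesis"
    then have "T ` I \<subseteq> {..y}" by (auto simp: not_less)
    then have "convex hull (T ` I) \<subseteq> {..y}" by (intro hull_minimal) auto
    then have "closure (convex hull (T ` I)) \<subseteq> {..y}" by (intro closure_minimal) auto
    then show False using hull ab y by auto
  qed
next
  fix y assume y: "a < y"
  show "\<exists>x\<in>I. T x < y"
  proof (rule ccontr)
    assume "\<not> ?thesis"
    then have "T ` I \<subseteq> {y..}" by (auto simp: not_less)
    then have "convex hull (T ` I) \<subseteq> {y..}" by (intro hull_minimal) auto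
    then have "closure (convex hull (T ` I)) \<subseteq> {y..}" by (intro closure_minimal) auto
    then show False using hull ab y by auto
  qed
qed

lemma gint_generic:
  fixes \<theta> S :: "real \<Rightarrow> real"
  assumes conv: "convex_on UNIV \<theta>"
    and mono: "(\<forall>y1 y2. a < y1 \<longrightarrow> y1 \<le> y2 \<longrightarrow> y2 < b \<longrightarrow> S y1 \<le> S y2) \<or>
               (\<forall>y1 y2. a < y1 \<longrightarrow> y1 \<le> y2 \<longrightarrow> y2 < b \<longrightarrow> S y2 \<le> S y1)"
    and pq: "a < p" "q < b"
  shows "set_integrable lborel {p..q} (\<lambda>z. left_deriv \<theta> (z - S z))"
proof (cases "p \<le> q")
  case False
  then show ?thesis by (simp add: set_integrable_def)
next
  case True
  define cl where "cl z = max p (min q z)" for z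
  have cl: "cl z \<in> {p..q}" for z using True by (auto simp: cl_def)
  have clm: "z1 \<le> z2 \<Longrightarrow> cl z1 \<le> cl z2" for z1 z2 by (auto simp: cl_def)
  have Dm: "mono (left_deriv \<theta>)" using left_deriv_mono[OF conv] by (auto intro: monoI)
  then have Db: "left_deriv \<theta> \<in> borel_measurable borel" by (rule borel_measurable_mono)
  have Sb: "(\<lambda>z. S (cl z)) \<in> borel_measurable borel"
    using mono
  proof
    assume m: "\<forall>y1 y2. a < y1 \<longrightarrow> y1 \<le> y2 \<longrightarrow> y2 < b \<longrightarrow> S y1 \<le> S y2"
    have "mono (\<lambda>z. S (cl z))"
    proof (rule monoI)
      fix z1 z2 :: real assume "z1 \<le> z2"
      then have "cl z1 \<le> cl z2" by (rule clm)
      moreover have "a < cl z1" "cl z2 < b" using cl[of z1] cl[of z2] pq by auto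
      ultimately show "S (cl z1) \<le> S (cl z2)" using m by blast
    qed
    then show ?thesis by (rule borel_measurable_mono)
  next
    assume m: "\<forall>y1 y2. a < y1 \<longrightarrow> y1 \<le> y2 \<longrightarrow> y2 < b \<longrightarrow> S y2 \<le> S y1"
    have "mono (\<lambda>z. - S (cl z))"
    proof (rule monoI)
      fix z1 z2 :: real assume "z1 \<le> z2"
      then have "cl z1 \<le> cl z2" by (rule clm)
      moreover have "a < cl z1" "cl z2 < b" using cl[of z1] cl[of z2] pq by auto
      ultimately show "- S (cl z1) \<le> - S (cl z2)" using m by force
    qed
    then have "(\<lambda>z. - S (cl z)) \<in> borel_measurable borel" by (rule borel_measurable_mono)
    then have "(\<lambda>z. - (- S (cl z))) \<in> borel_measurable borel" by (rule borel_measurable_uminus)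
    then show ?thesis by simp
  qed
  define lo where "lo = p - max (S p) (S q)"
  define hi where "hi = q - min (S p) (S q)"
  have Sr: "min (S p) (S q) \<le> S z \<and> S z \<le> max (S p) (S q)" if "z \<in> {p..q}" for z
    using mono
  proof
    assume m: "\<forall>y1 y2. a < y1 \<longrightarrow> y1 \<le> y2 \<longrightarrow> y2 < b \<longrightarrow> S y1 \<le> S y2"
    then have "S p \<le> S z" "S z \<le> S q" using that pq by auto
    then show ?thesis by auto
  next
    assume m: "\<forall>y1 y2. a < y1 \<longrightarrow> y1 \<le> y2 \<longrightarrow> y2 < b \<longrightarrow> S y2 \<le> S y1"
    then have "S z \<le> S p" "S q \<le> S z" using that pq by auto
    then show ?thesis by auto
  qed
  have "set_integrable lborel {p..q} (\<lambda>z. left_deriv \<theta> (z - S (cl z)))"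
  proof (rule set_integrable_bdd)
    have "(\<lambda>z. z - S (cl z)) \<in> borel_measurable borel"
      using Sb by (intro borel_measurable_diff) auto
    then show "(\<lambda>z. left_deriv \<theta> (z - S (cl z))) \<in> borel_measurable borel"
      using Db by (rule measurable_compose)
    fix z assume z: "z \<in> {p..q}"
    then have "cl z = z" unfolding cl_def by simp
    moreover have "lo \<le> z - S z" "z - S z \<le> hi" using Sr[OF z] z by (auto simp: lo_def hi_def)
    then have "left_deriv \<theta> lo \<le> left_deriv \<theta> (z - S z)" "left_deriv \<theta> (z - S z) \<le> left_deriv \<theta> hi"
      using Dm by (auto dest: monoD)
    ultimately show "\<bar>left_deriv \<theta> (z - S (cl z))\<bar> \<le> \<bar>left_deriv \<theta> lo\<bar> + \<bar>left_deriv \<theta> hi\<bar>"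
      by simp
  qed
  moreover have "z \<in> {p..q} \<Longrightarrow> left_deriv \<theta> (z - S (cl z)) = left_deriv \<theta> (z - S z)" for z
    by (auto simp: cl_def)
  ultimately show ?thesis by (subst (asm) set_integrable_cong[of lborel lborel "{p..q}" "{p..q}"]) auto
qed



lemma case_a:
  fixes \<theta> T :: "real \<Rightarrow> real" and I :: "real set" and a b y0 :: real
  assumes conv: "convex_on UNIV \<theta>"
    and hull: "closure (convex hull (T ` I)) = {a..b}"
    and y0: "y0 \<in> {a<..<b}"
    and Tm: "mono_on I T"
  shows "continuous_on {a<..<b} (psi_of \<theta> (S_lower I T) y0) \<and>
        (\<forall>x\<in>I. \<forall>y'\<in>{a..b}.
           (y' \<le> T x \<and> (\<forall>x'\<in>I. x' < x \<longrightarrow> T x' \<le> y')) \<longrightarrow>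
           - ext_ab a b (psi_of \<theta> (S_lower I T) y0) y' + ereal (\<theta> (y' - x)) =
           (INF y\<in>{a..b}. - ext_ab a b (psi_of \<theta> (S_lower I T) y0) y + ereal (\<theta> (y - x))))"
proof -
  let ?S = "S_lower I T"
  define A where "A y = {x\<in>I. y \<le> T x}" for y
  have S_def': "?S y = Inf (A y)" for y by (simp add: S_lower_def A_def)
  have y0': "a < y0" "y0 < b" using y0 by auto
  then have ab: "a < b" by simp
  note hf = hull_facts[OF hull ab]
  have ne: "A y \<noteq> {}" if "y < b" for y
    using hf(1)[OF that] by (auto simp: A_def)
  have bdd: "bdd_below (A y)" if ay: "a < y" for y
  proof -
    obtain x0 where x0: "x0 \<in> I" "T x0 < y" using hf(2)[OF ay] by blast
    have "x0 \<le> x" if "x \<in> A y" for x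
    proof (rule ccontr)
      assume "\<not> x0 \<le> x"
      moreover have "x \<in> I" using that by (simp add: A_def)
      ultimately have "T x \<le> T x0" using Tm x0 by (intro mono_onD[OF Tm]) auto
      then show False using x0 that by (auto simp: A_def)
    qed
    then show ?thesis by (rule bdd_belowI)
  qed
  have Sle: "?S z \<le> x" if "a < z" "x \<in> I" "z \<le> T x" for z x
    unfolding S_def' by (rule cInf_lower) (use that bdd in \<open>auto simp: A_def\<close>)
  have Sge: "x \<le> ?S z" if "z < b" "\<forall>x'\<in>I. x' < x \<longrightarrow> T x' < z" for z x
    unfolding S_def' by (rule cInf_greatest) (use that ne in \<open>auto simp: A_def not_less[symmetric]\<close>)
  have Smono: "?S y1 \<le> ?S y2" if "a < y1" "y1 \<le> y2" "y2 < b" for y1 y2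
    unfolding S_def' by (rule cInf_superset_mono) (use that ne bdd in \<open>auto simp: A_def\<close>)
  have Dm: "\<And>s t. s \<le> t \<Longrightarrow> left_deriv \<theta> s \<le> left_deriv \<theta> t" using left_deriv_mono[OF conv] .
  have gint: "\<And>p q. a < p \<Longrightarrow> q < b \<Longrightarrow> set_integrable lborel {p..q} (\<lambda>z. left_deriv \<theta> (z - ?S z))"
    by (rule gint_generic[OF conv]) (use Smono in auto)
  have la: "\<exists>l. ((\<lambda>z. ereal (psi_of \<theta> ?S y0 z)) \<longlongrightarrow> l) (at_right a)"
    unfolding psi_of_eq
    by (rule psi_lim_right[OF conv gint y0' y0', of "?S y0"]) (use Smono y0' Dm in auto)
  have lb: "\<exists>l. ((\<lambda>z. ereal (psi_of \<theta> ?S y0 z)) \<longlongrightarrow> l) (at_left b)"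
    unfolding psi_of_eq
    by (rule psi_lim_left[OF conv gint y0' y0', of "?S y0"]) (use Smono y0' Dm in auto)
  have cont: "continuous_on {a<..<b} (psi_of \<theta> ?S y0)"
    unfolding psi_of_eq by (rule psi_cont[OF gint y0'])
  show ?thesis
  proof (intro conjI cont ballI impI)
    fix x y' assume x: "x \<in> I" and y': "y' \<in> {a..b}"
      and h: "y' \<le> T x \<and> (\<forall>x'\<in>I. x' < x \<longrightarrow> T x' \<le> y')"
    show "- ext_ab a b (psi_of \<theta> ?S y0) y' + ereal (\<theta> (y' - x)) =
           (INF y\<in>{a..b}. - ext_ab a b (psi_of \<theta> ?S y0) y + ereal (\<theta> (y - x)))"
    proof (rule generic_INF[OF conv y0' gint la lb _ _ y'])
      fix z assume z: "a < z" "z < b" "z \<le> y'"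
      have "?S z \<le> x" by (rule Sle) (use z x h in auto)
      then show "left_deriv \<theta> (z - x) \<le> left_deriv \<theta> (z - ?S z)" by (intro Dm) simp
    next
      fix z assume z: "a < z" "z < b" "y' < z"
      have "x \<le> ?S z" by (rule Sge) (use z h in force)+
      then show "left_deriv \<theta> (z - ?S z) \<le> left_deriv \<theta> (z - x)" by (intro Dm) simp
    qed
  qed
qed

lemma case_b:
  fixes \<theta> T :: "real \<Rightarrow> real" and I :: "real set" and a b y0 :: real
  assumes conv: "convex_on UNIV \<theta>"
    and hull: "closure (convex hull (T ` I)) = {a..b}"
    and y0: "y0 \<in> {a<..<b}"
    and Tm: "monotone_on I (\<le>) (\<ge>) T"
  shows "continuous_on {a<..<b} (psi_of \<theta> (S_upper I T) y0) \<and>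
        (\<forall>x\<in>I. \<forall>y'\<in>{a..b}.
           (y' \<le> T x \<and> (\<forall>x'\<in>I. x < x' \<longrightarrow> T x' \<le> y')) \<longrightarrow>
           - ext_ab a b (psi_of \<theta> (S_upper I T) y0) y' + ereal (\<theta> (y' - x)) =
           (SUP y\<in>{a..b}. - ext_ab a b (psi_of \<theta> (S_upper I T) y0) y + ereal (\<theta> (y - x))))"
proof -
  let ?S = "S_upper I T"
  define A where "A y = {x\<in>I. y \<le> T x}" for y
  have S_def': "?S y = Sup (A y)" for y by (simp add: S_upper_def A_def)
  have y0': "a < y0" "y0 < b" using y0 by auto
  then have ab: "a < b" by simp
  note hf = hull_facts[OF hull ab]
  have ne: "A y \<noteq> {}" if "y < b" for y
    using hf(1)[OF that] by (auto simp: A_def)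
  have bdd: "bdd_above (A y)" if ay: "a < y" for y
  proof -
    obtain x0 where x0: "x0 \<in> I" "T x0 < y" using hf(2)[OF ay] by blast
    have "x \<le> x0" if "x \<in> A y" for x
    proof (rule ccontr)
      assume "\<not> x \<le> x0"
      moreover have "x \<in> I" using that by (simp add: A_def)
      ultimately have "T x \<le> T x0" using Tm x0 monotone_onD[OF Tm, of x0 x] by auto
      then show False using x0 that by (auto simp: A_def)
    qed
    then show ?thesis by (rule bdd_aboveI)
  qed
  have Sge: "x \<le> ?S z" if "a < z" "x \<in> I" "z \<le> T x" for z x
    unfolding S_def' by (rule cSup_upper) (use that bdd in \<open>auto simp: A_def\<close>)
  have Sle: "?S z \<le> x" if "z < b" "\<forall>x'\<in>I. x < x' \<longrightarrow> T x' < z" for z x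
    unfolding S_def' by (rule cSup_least) (use that ne in \<open>auto simp: A_def not_less[symmetric]\<close>)
  have Smono: "?S y2 \<le> ?S y1" if "a < y1" "y1 \<le> y2" "y2 < b" for y1 y2
    unfolding S_def' by (rule cSup_subset_mono) (use that ne bdd in \<open>auto simp: A_def\<close>)
  have Dm: "\<And>s t. s \<le> t \<Longrightarrow> left_deriv \<theta> s \<le> left_deriv \<theta> t" using left_deriv_mono[OF conv] .
  have gint: "\<And>p q. a < p \<Longrightarrow> q < b \<Longrightarrow> set_integrable lborel {p..q} (\<lambda>z. left_deriv \<theta> (z - ?S z))"
    by (rule gint_generic[OF conv]) (use Smono in auto)
  have la: "\<exists>l. ((\<lambda>z. ereal (psi_of \<theta> ?S y0 z)) \<longlongrightarrow> l) (at_right a)"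
    unfolding psi_of_eq
    by (rule psi_lim_right[OF conv gint y0' y0', of "?S y0"]) (use Smono y0' Dm in auto)
  have lb: "\<exists>l. ((\<lambda>z. ereal (psi_of \<theta> ?S y0 z)) \<longlongrightarrow> l) (at_left b)"
    unfolding psi_of_eq
    by (rule psi_lim_left[OF conv gint y0' y0', of "?S y0"]) (use Smono y0' Dm in auto)
  have cont: "continuous_on {a<..<b} (psi_of \<theta> ?S y0)"
    unfolding psi_of_eq by (rule psi_cont[OF gint y0'])
  show ?thesis
  proof (intro conjI cont ballI impI)
    fix x y' assume x: "x \<in> I" and y': "y' \<in> {a..b}"
      and h: "y' \<le> T x \<and> (\<forall>x'\<in>I. x < x' \<longrightarrow> T x' \<le> y')"
    show "- ext_ab a b (psi_of \<theta> ?S y0) y' + ereal (\<theta> (y' - x)) =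
           (SUP y\<in>{a..b}. - ext_ab a b (psi_of \<theta> ?S y0) y + ereal (\<theta> (y - x)))"
    proof (rule generic_SUP[OF conv y0' gint la lb _ _ y'])
      fix z assume z: "a < z" "z < b" "z \<le> y'"
      have "x \<le> ?S z" by (rule Sge) (use z x h in auto)
      then show "left_deriv \<theta> (z - ?S z) \<le> left_deriv \<theta> (z - x)" by (intro Dm) simp
    next
      fix z assume z: "a < z" "z < b" "y' < z"
      have "?S z \<le> x" by (rule Sle) (use z h in force)+
      then show "left_deriv \<theta> (z - x) \<le> left_deriv \<theta> (z - ?S z)" by (intro Dm) simp
    qed
  qed
qed


theorem lemma3p14:
  fixes \<theta> T :: "real \<Rightarrow> real" and I :: "real set" and a b y0 :: real
  assumes conv: "convex_on UNIV \<theta>"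
    and hull: "closure (convex hull (T ` I)) = {a..b}"
    and y0: "y0 \<in> {a<..<b}"
  shows
    "(mono_on I T \<longrightarrow>
        continuous_on {a<..<b} (psi_of \<theta> (S_lower I T) y0) \<and>
        (\<forall>x\<in>I. \<forall>y'\<in>{a..b}.
           (y' \<le> T x \<and> (\<forall>x'\<in>I. x' < x \<longrightarrow> T x' \<le> y')) \<longrightarrow>
           - ext_ab a b (psi_of \<theta> (S_lower I T) y0) y' + ereal (\<theta> (y' - x)) =
           (INF y\<in>{a..b}. - ext_ab a b (psi_of \<theta> (S_lower I T) y0) y + ereal (\<theta> (y - x)))))
     \<and>
     (monotone_on I (\<le>) (\<ge>) T \<longrightarrow>
        continuous_on {a<..<b} (psi_of \<theta> (S_upper I T) y0) \<and>
        (\<forall>x\<in>I. \<forall>y'\<in>{a..b}.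
           (y' \<le> T x \<and> (\<forall>x'\<in>I. x < x' \<longrightarrow> T x' \<le> y')) \<longrightarrow>
           - ext_ab a b (psi_of \<theta> (S_upper I T) y0) y' + ereal (\<theta> (y' - x)) =
           (SUP y\<in>{a..b}. - ext_ab a b (psi_of \<theta> (S_upper I T) y0) y + ereal (\<theta> (y - x)))))"
proof (intro conjI impI)
  assume "mono_on I T"
  then show "continuous_on {a<..<b} (psi_of \<theta> (S_lower I T) y0)"
    using case_a[OF conv hull y0] by blast
next
  assume "mono_on I T"
  then show "\<forall>x\<in>I. \<forall>y'\<in>{a..b}.
           (y' \<le> T x \<and> (\<forall>x'\<in>I. x' < x \<longrightarrow> T x' \<le> y')) \<longrightarrow>
           - ext_ab a b (psi_of \<theta> (S_lower I T) y0) y' + ereal (\<theta> (y' - x)) =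
           (INF y\<in>{a..b}. - ext_ab a b (psi_of \<theta> (S_lower I T) y0) y + ereal (\<theta> (y - x)))"
    using case_a[OF conv hull y0] by blast
next
  assume "monotone_on I (\<le>) (\<ge>) T"
  then show "continuous_on {a<..<b} (psi_of \<theta> (S_upper I T) y0)"
    using case_b[OF conv hull y0] by blast
next
  assume "monotone_on I (\<le>) (\<ge>) T"
  then show "\<forall>x\<in>I. \<forall>y'\<in>{a..b}.
           (y' \<le> T x \<and> (\<forall>x'\<in>I. x < x' \<longrightarrow> T x' \<le> y')) \<longrightarrow>
           - ext_ab a b (psi_of \<theta> (S_upper I T) y0) y' + ereal (\<theta> (y' - x)) =
           (SUP y\<in>{a..b}. - ext_ab a b (psi_of \<theta> (S_upper I T) y0) y + ereal (\<theta> (y - x)))"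
    using case_b[OF conv hull y0] by blast
qed

end
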